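(* Let $\mathbb{K}$ be a field of characteristic zero, let $t,s\in\mathbb{K}\setminus\{0,1\}$, and let $\mathfrak{g}$ be a finite-dimensional non-perfect Lie algebra over $\mathbb{K}$ (i.e. $\mathfrak{g}^{(2)}\neq\mathfrak{g}$). Then $\mathcal{D}(t,1,0)(\mathfrak{g})$ and $\mathcal{D}(s,1,0)(\mathfrak{g})$ are isomorphic vector spaces.
   Context: For a Lie algebra $\mathfrak{g}=(V,\mu)$, the derived algebra $\mathfrak{g}^{(2)}$ is the linear span of all products $\mu(X,Y)$. For $t\in\mathbb{K}$, $\mathcal{D}(t,1,0)(\mathfrak{g})$ denotes the space of $(t,1,0)$-derivations of $\mathfrak{g}$: linear maps $D:V\to V$ with $tD\mu(X,Y)=\mu(DX,Y)$ for all $X,Y\in V$. *)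

theory Defs
  imports Main "HOL.Vector_Spaces"
begin

definition lie_algebra :: "('k::field \<Rightarrow> 'v::ab_group_add \<Rightarrow> 'v) \<Rightarrow> ('v \<Rightarrow> 'v \<Rightarrow> 'v) \<Rightarrow> bool" where
  "lie_algebra scale mu \<longleftrightarrow>
     vector_space scale \<and>
     (\<forall>x. Vector_Spaces.linear scale scale (mu x)) \<and>
     (\<forall>y. Vector_Spaces.linear scale scale (\<lambda>x. mu x y)) \<and>
     (\<forall>x. mu x x = 0) \<and>
     (\<forall>x y z. mu x (mu y z) + mu y (mu z x) + mu z (mu x y) = 0)"

definition finite_dim :: "('k::field \<Rightarrow> 'v::ab_group_add \<Rightarrow> 'v) \<Rightarrow> bool" where
  "finite_dim scale \<longleftrightarrow> (\<exists>B. finite B \<and> module.span scale B = UNIV)"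

definition derived_algebra :: "('k::field \<Rightarrow> 'v::ab_group_add \<Rightarrow> 'v) \<Rightarrow> ('v \<Rightarrow> 'v \<Rightarrow> 'v) \<Rightarrow> 'v set" where
  "derived_algebra scale mu = module.span scale {mu x y | x y. True}"

definition t10_derivations :: "('k::field \<Rightarrow> 'v::ab_group_add \<Rightarrow> 'v) \<Rightarrow> ('v \<Rightarrow> 'v \<Rightarrow> 'v) \<Rightarrow> 'k \<Rightarrow> ('v \<Rightarrow> 'v) set" where
  "t10_derivations scale mu t =
     {D. Vector_Spaces.linear scale scale D \<and> (\<forall>x y. scale t (D (mu x y)) = mu (D x) y)}"

definition iso_endo_spaces :: "('k::field \<Rightarrow> 'v::ab_group_add \<Rightarrow> 'v) \<Rightarrow> ('v \<Rightarrow> 'v) set \<Rightarrow> ('v \<Rightarrow> 'v) set \<Rightarrow> bool" where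
  "iso_endo_spaces scale A B \<longleftrightarrow>
     (\<exists>\<phi>. bij_betw \<phi> A B \<and>
        (\<forall>D1\<in>A. \<forall>D2\<in>A. \<phi> (\<lambda>x. D1 x + D2 x) = (\<lambda>x. \<phi> D1 x + \<phi> D2 x)) \<and>
        (\<forall>c. \<forall>D\<in>A. \<phi> (\<lambda>x. scale c (D x)) = (\<lambda>x. scale c (\<phi> D x))))"

end

theory Submission
  imports Defs
begin

lemma lin_facts:
  assumes "Vector_Spaces.linear scale scale (f :: 'v::ab_group_add \<Rightarrow> 'v)"
  shows "f (a + b) = f a + f b" "f (scale (c::'k::field) a) = scale c (f a)" "f 0 = 0" "f (- a) = - f a"
proof -
  have mh: "module_hom scale scale f" using assms module_hom_iff_linear by blast
  show "f (a + b) = f a + f b" using module_hom.add[OF mh] .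
  show "f (scale c a) = scale c (f a)" using module_hom.scale[OF mh] .
  show "f 0 = 0" using module_hom.zero[OF mh] .
  show "f (- a) = - f a" using module_hom.neg[OF mh] .
qed

lemma keyD:
  fixes scale :: "'k::field \<Rightarrow> 'v::ab_group_add \<Rightarrow> 'v"
  assumes lie: "lie_algebra scale mu"
    and D: "D \<in> t10_derivations scale mu t"
    and t0: "t \<noteq> 0" and t1: "t \<noteq> 1"
    and z: "z \<in> derived_algebra scale mu"
  shows "mu (D z) y = 0"
proof -
  interpret vs: vector_space scale using lie unfolding lie_algebra_def by blast
  have linR: "\<And>x. Vector_Spaces.linear scale scale (mu x)" using lie unfolding lie_algebra_def by blast
  have linL: "\<And>y. Vector_Spaces.linear scale scale (\<lambda>x. mu x y)" using lie unfolding lie_algebra_def by blast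
  have alt: "\<And>x. mu x x = 0" using lie unfolding lie_algebra_def by blast
  have jac: "\<And>x y z. mu x (mu y z) + mu y (mu z x) + mu z (mu x y) = 0"
    using lie unfolding lie_algebra_def by blast
  have linD: "Vector_Spaces.linear scale scale D" and H: "\<And>x y. scale t (D (mu x y)) = mu (D x) y"
    using D unfolding t10_derivations_def by auto
  note R = lin_facts[OF linR] and L = lin_facts[OF linL, simplified] and DD = lin_facts[OF linD]
  have anti: "\<And>x y. mu y x = - mu x y"
  proof -
    fix x y
    have "0 = mu (x + y) (x + y)" using alt by simp
    also have "\<dots> = mu x x + mu x y + mu y x + mu y y" using R(1) L(1) by (simp add: add.assoc)
    finally have "mu x y + mu y x = 0" using alt by simp
    then show "mu y x = - mu x y" by (simp add: eq_neg_iff_add_eq_0 add.commute)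
  qed
  have sym: "\<And>x y. mu (D x) y = mu x (D y)"
  proof -
    fix x y
    have "mu (D x) y = scale t (D (mu x y))" using H by simp
    also have "\<dots> = scale t (D (- mu y x))" by (metis anti minus_minus)
    also have "\<dots> = - scale t (D (mu y x))" using DD(4) vs.scale_minus_right by simp
    also have "\<dots> = - mu (D y) x" using H by simp
    also have "\<dots> = mu x (D y)" by (metis anti minus_minus)
    finally show "mu (D x) y = mu x (D y)" .
  qed
  define A where "A x y z = mu (D x) (mu y z)" for x y z
  have cyc: "A x y z + A y z x + A z x y = 0" for x y z
  proof -
    have "D (mu x (mu y z) + mu y (mu z x) + mu z (mu x y)) = 0" using jac DD(3) by simp
    then have "scale t (D (mu x (mu y z))) + scale t (D (mu y (mu z x))) + scale t (D (mu z (mu x y))) = 0"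
      using DD(1) by (simp add: vs.scale_right_distrib[symmetric])
    then show ?thesis unfolding A_def H .
  qed
  have E2: "A x y z + scale t (A y z x) + scale t (A z x y) = 0" for x y z
  proof -
    have j: "mu (D x) (mu y z) + mu y (mu z (D x)) + mu z (mu (D x) y) = 0" by (rule jac)
    have a: "mu y (mu z (D x)) = scale t (A y z x)"
    proof -
      have "mu z (D x) = scale t (D (mu z x))" using sym H by metis
      then have "mu y (mu z (D x)) = scale t (mu y (D (mu z x)))" using R(2) by simp
      also have "\<dots> = scale t (A y z x)" unfolding A_def using sym by metis
      finally show ?thesis .
    qed
    have b: "mu z (mu (D x) y) = scale t (A z x y)"
    proof -
      have "mu z (mu (D x) y) = scale t (mu z (D (mu x y)))" using H R(2) by metis
      also have "\<dots> = scale t (A z x y)" unfolding A_def using sym by metis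
      finally show ?thesis .
    qed
    show ?thesis using j a b unfolding A_def by simp
  qed
  have A0: "A x y z = 0" for x y z
  proof -
    have "A y z x + A z x y = - A x y z" using cyc[of x y z]
      by (metis add.assoc add_eq_0_iff)
    then have "A x y z + scale t (- A x y z) = 0" using E2[of x y z]
      by (metis add.assoc vs.scale_right_distrib)
    then have "scale (1 - t) (A x y z) = 0"
      by (simp add: vs.scale_left_diff_distrib vs.scale_minus_right)
    then show ?thesis using t1 by simp
  qed
  have D3: "D (mu x (mu y z)) = 0" for x y z
    using H[of x "mu y z"] A0[of x y z] t0 unfolding A_def by simp
  have gen: "mu (D (mu a b)) y = 0" for a b y
  proof -
    have "mu (D (mu a b)) y = scale t (D (mu (mu a b) y))" using H by simp
    also have "\<dots> = scale t (D (- mu y (mu a b)))" using anti by metis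
    also have "\<dots> = 0" using DD(4) D3 by simp
    finally show ?thesis .
  qed
  have "z \<in> vs.span {mu x y | x y. True}" using z unfolding derived_algebra_def .
  then show ?thesis
  proof (induction arbitrary: y rule: vs.span_induct_alt)
    case base
    then show ?case using DD(3) L(3) by simp
  next
    case (step c x w)
    then obtain a b where "x = mu a b" by blast
    then show ?case using step DD(1,2) L(1,2) gen by simp
  qed
qed


lemma map_ok:
  fixes scale :: "'k::field \<Rightarrow> 'v::ab_group_add \<Rightarrow> 'v"
  assumes lie: "lie_algebra scale mu"
    and linP: "Vector_Spaces.linear scale scale P"
    and Pin: "\<And>x. P x \<in> derived_algebra scale mu"
    and Pid: "\<And>x. x \<in> derived_algebra scale mu \<Longrightarrow> P x = x"
    and t0: "t \<noteq> 0" and t1: "t \<noteq> 1" and s0: "s \<noteq> 0"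
    and D: "D \<in> t10_derivations scale mu t"
  shows "(\<lambda>x. D x + scale (t / s - 1) (D (P x))) \<in> t10_derivations scale mu s"
proof -
  interpret vs: vector_space scale using lie unfolding lie_algebra_def by blast
  have linL: "\<And>y. Vector_Spaces.linear scale scale (\<lambda>x. mu x y)" using lie unfolding lie_algebra_def by blast
  have linD: "Vector_Spaces.linear scale scale D" and H: "\<And>x y. scale t (D (mu x y)) = mu (D x) y"
    using D unfolding t10_derivations_def by auto
  note L = lin_facts[OF linL, simplified] and DD = lin_facts[OF linD] and PP = lin_facts[OF linP]
  let ?c = "t / s - 1"
  have lin: "Vector_Spaces.linear scale scale (\<lambda>x. D x + scale ?c (D (P x)))"
    unfolding linear_iff using vs.vector_space_axioms
    by (simp add: DD PP vs.scale_right_distrib vs.scale_scale mult.commute)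
  have "scale s (D (mu x y) + scale ?c (D (P (mu x y)))) = mu (D x + scale ?c (D (P x))) y" for x y
  proof -
    have mem: "mu x y \<in> derived_algebra scale mu"
      unfolding derived_algebra_def by (rule vs.span_base) blast
    have e: "s + s * ?c = t" using s0 by (simp add: field_simps)
    have "scale s (D (mu x y) + scale ?c (D (P (mu x y)))) = scale s (D (mu x y)) + scale (s * ?c) (D (mu x y))"
      using Pid[OF mem] by (simp add: vs.scale_right_distrib vs.scale_scale)
    also have "\<dots> = scale (s + s * ?c) (D (mu x y))" by (simp add: vs.scale_left_distrib)
    also have "\<dots> = scale t (D (mu x y))" using e by simp
    also have "\<dots> = mu (D x) y" by (rule H)
    also have "\<dots> = mu (D x + scale ?c (D (P x))) y"
      using keyD[OF lie D t0 t1 Pin[of x], of y] by (simp add: L)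
    finally show ?thesis .
  qed
  then show ?thesis using lin unfolding t10_derivations_def by simp
qed

lemma inv_ok:
  fixes scale :: "'k::field \<Rightarrow> 'v::ab_group_add \<Rightarrow> 'v"
  assumes vs: "vector_space scale"
    and linD: "Vector_Spaces.linear scale scale D"
    and PP: "\<And>x. P (P x) = P x"
    and cd: "c + d + c * d = 0"
  shows "(\<lambda>x. (D x + scale c (D (P x))) + scale d (D (P x) + scale c (D (P (P x))))) = D"
proof
  interpret vs: vector_space scale by fact
  fix x
  have "(D x + scale c (D (P x))) + scale d (D (P x) + scale c (D (P (P x))))
     = D x + scale (c + d + d * c) (D (P x))"
    by (simp add: PP vs.scale_right_distrib vs.scale_left_distrib vs.scale_scale add.assoc)
  also have "\<dots> = D x" using cd by (simp add: mult.commute)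
  finally show "(D x + scale c (D (P x))) + scale d (D (P x) + scale c (D (P (P x)))) = D x" .
qed

theorem theorem3p5:
  fixes scale :: "'k::field_char_0 \<Rightarrow> 'v::ab_group_add \<Rightarrow> 'v"
    and mu :: "'v \<Rightarrow> 'v \<Rightarrow> 'v"
    and t s :: 'k
  assumes "lie_algebra scale mu"
    and "finite_dim scale"
    and "derived_algebra scale mu \<noteq> UNIV"
    and "t \<noteq> 0" "t \<noteq> 1" "s \<noteq> 0" "s \<noteq> 1"
  shows "iso_endo_spaces scale (t10_derivations scale mu t) (t10_derivations scale mu s)"
proof -
  note lie = assms(1)
  interpret vs: vector_space scale using lie unfolding lie_algebra_def by blast
  interpret vp: vector_space_pair scale scale
    by (simp add: vector_space_pair_def vs.vector_space_axioms)
  let ?S = "derived_algebra scale mu"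
  have subS: "vs.subspace ?S" unfolding derived_algebra_def by simp
  obtain B where B: "B \<subseteq> ?S" "vs.independent B" "?S \<subseteq> vs.span B"
    using vs.maximal_independent_subset[of ?S] by blast
  define P where "P = vp.construct B id"
  have linP: "Vector_Spaces.linear scale scale P" unfolding P_def by (rule vp.linear_construct[OF B(2)])
  have Pin: "P x \<in> ?S" for x
  proof -
    have "P x \<in> vs.span (id ` B)" unfolding P_def by (rule vp.construct_in_span[OF B(2)])
    also have "\<dots> \<subseteq> ?S" using B(1) subS by (simp add: vs.span_minimal)
    finally show ?thesis .
  qed
  have Pid: "P x = x" if "x \<in> ?S" for x
  proof -
    have "x \<in> vs.span B" using that B(3) by blast
    then show ?thesis
      by (rule vp.linear_eq_on[OF linP vs.linear_ident]) (simp add: P_def vp.construct_basis[OF B(2)])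
  qed
  have PP: "P (P x) = P x" for x using Pid Pin by blast
  define \<phi> where "\<phi> D = (\<lambda>x. D x + scale (t / s - 1) (D (P x)))" for D :: "'v \<Rightarrow> 'v"
  define \<psi> where "\<psi> D = (\<lambda>x. D x + scale (s / t - 1) (D (P x)))" for D :: "'v \<Rightarrow> 'v"
  have cd1: "(t / s - 1) + (s / t - 1) + (t / s - 1) * (s / t - 1) = 0"
    using assms(4,6) by (simp add: field_simps)
  have cd2: "(s / t - 1) + (t / s - 1) + (s / t - 1) * (t / s - 1) = 0"
    using assms(4,6) by (simp add: field_simps)
  have lin: "Vector_Spaces.linear scale scale D" if "D \<in> t10_derivations scale mu r" for D r
    using that unfolding t10_derivations_def by auto
  have "bij_betw \<phi> (t10_derivations scale mu t) (t10_derivations scale mu s)"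
  proof (rule bij_betw_byWitness[where f' = \<psi>])
    show "\<forall>D\<in>t10_derivations scale mu t. \<psi> (\<phi> D) = D"
      unfolding \<phi>_def \<psi>_def using inv_ok[OF vs.vector_space_axioms lin PP cd1] by blast
    show "\<forall>D\<in>t10_derivations scale mu s. \<phi> (\<psi> D) = D"
      unfolding \<phi>_def \<psi>_def using inv_ok[OF vs.vector_space_axioms lin PP cd2] by blast
    show "\<phi> ` t10_derivations scale mu t \<subseteq> t10_derivations scale mu s"
      unfolding \<phi>_def using map_ok[OF lie linP Pin Pid assms(4,5,6)] by blast
    show "\<psi> ` t10_derivations scale mu s \<subseteq> t10_derivations scale mu t"
      unfolding \<psi>_def using map_ok[OF lie linP Pin Pid assms(6,7,4)] by blast
  qed
  moreover have "\<forall>D1\<in>t10_derivations scale mu t. \<forall>D2\<in>t10_derivations scale mu t.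
      \<phi> (\<lambda>x. D1 x + D2 x) = (\<lambda>x. \<phi> D1 x + \<phi> D2 x)"
    unfolding \<phi>_def by (simp add: vs.scale_right_distrib algebra_simps)
  moreover have "\<forall>c. \<forall>D\<in>t10_derivations scale mu t.
      \<phi> (\<lambda>x. scale c (D x)) = (\<lambda>x. scale c (\<phi> D x))"
    unfolding \<phi>_def by (simp add: vs.scale_right_distrib vs.scale_scale mult.commute)
  ultimately show ?thesis unfolding iso_endo_spaces_def by blast
qed

end
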